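(* Let $p>0$, $m>0$, and let $N$ be a random variable on $\mathbb{N}_0$ with the Abel probability mass function \[ f(n)=\mathbb{P}(N=n)=\frac{p\,(p+n)^{n-1}}{n!}\exp\Big(n\Big(\log\frac{m}{m+p}-\frac{m}{m+p}\Big)-\frac{mp}{m+p}\Big),\quad n\in\mathbb{N}_0 . \] Let $b(n)=\frac{1}{\sqrt{n+1}}\Big(\sqrt{1+\tfrac1n}-1\Big)$ for $n\in\mathbb{N}=\{1,2,\dots\}$. Then there is a constant $C$ not depending on $n$ such that \[ f(n\mid n\ge 1):=\mathbb{P}(N=n\mid N\ge 1)\le C\,b(n)\qquad\text{for all } n=1,2,\ldots. \]
   Context: $b$ is the probability mass function of $\lfloor U^{-2}\rfloor$ for $U$ uniform on $(0,1)$. The constant $C$ may depend on $p$ and $m$. *)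

theory Defs
  imports "HOL-Analysis.Analysis"
begin

definition abel_pmf :: "real \<Rightarrow> real \<Rightarrow> nat \<Rightarrow> real" where
  "abel_pmf p m n =
     p * (p + real n) powr (real n - 1) / fact n *
     exp (real n * (ln (m / (m + p)) - m / (m + p)) - m * p / (m + p))"

definition abel_cond_pmf :: "real \<Rightarrow> real \<Rightarrow> nat \<Rightarrow> real" where
  "abel_cond_pmf p m n = abel_pmf p m n / (\<Sum>k. abel_pmf p m (Suc k))"

text \<open>b(n) = (sqrt(1 + 1/n) - 1) / sqrt(n+1), the pmf of floor(U^(-2)).\<close>
definition b_fun :: "nat \<Rightarrow> real" where
  "b_fun n = (sqrt (1 + 1 / real n) - 1) / sqrt (real n + 1)"

end

theory Submission
  imports Defs
begin

lemma pow_le_exp_fact: "real n ^ n \<le> exp (real n) * fact n"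
proof -
  have s: "summable (\<lambda>k. real n ^ k / fact k)"
    using exp_converges[of "real n"] by (simp add: sums_iff divide_inverse mult.commute)
  have e: "exp (real n) = (\<Sum>k. real n ^ k / fact k)"
    using exp_converges[of "real n"] by (simp add: sums_iff divide_inverse mult.commute)
  have "real n ^ n / fact n \<le> (\<Sum>k\<in>{..<Suc n}. real n ^ k / fact k)"
    by (rule member_le_sum) auto
  also have "\<dots> \<le> exp (real n)" unfolding e
    by (rule sum_le_suminf[OF s]) auto
  finally show ?thesis by (simp add: divide_le_eq)
qed

lemma ln_strict: fixes r :: real assumes "0 < r" "r < 1" shows "ln r < r - 1"
proof -
  have q: "0 < sqrt r" "sqrt r < 1" using assms by auto
  have "ln r = 2 * ln (sqrt r)" using assms by (simp add: ln_sqrt)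
  also have "\<dots> \<le> 2 * (sqrt r - 1)" using ln_le_minus_one[OF q(1)] by simp
  also have "\<dots> < r - 1"
  proof -
    have "0 < (sqrt r - 1)^2" using q by simp
    also have "(sqrt r - 1)^2 = r - 2 * sqrt r + 1" using assms by (simp add: power2_eq_square algebra_simps)
    finally show ?thesis by simp
  qed
  finally show ?thesis .
qed

lemma geo_bound: fixes s :: real assumes "0 < s" "s < 1" shows "real n * s ^ n \<le> s / (1 - s)"
proof -
  define d where "d = 1 / s - 1"
  have d: "0 < d" using assms by (simp add: d_def)
  have "1 + real n * d \<le> (1 + d) ^ n" using Bernoulli_inequality[of d n] d by simp
  hence "real n * d \<le> (1/s) ^ n" by (simp add: d_def)
  hence "real n * d * s ^ n \<le> 1" using assms by (simp add: power_one_over field_simps)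
  moreover have "d = (1 - s) / s" using assms by (simp add: d_def field_simps)
  ultimately have "real n * s ^ n * (1 - s) \<le> s" using assms by (simp add: field_simps)
  thus ?thesis using assms by (simp add: field_simps)
qed

lemma div_aux: "x * y = (c::real) \<Longrightarrow> y > 0 \<Longrightarrow> x = c / y"
  by (simp add: eq_divide_eq)

lemma aux3: "(n::real) \<ge> 1 \<Longrightarrow> y \<le> 2 \<Longrightarrow> y \<ge> 0 \<Longrightarrow> 1 / (3 * n) \<le> (1 / n) / (y + 1)"
proof -
  assume h: "n \<ge> 1" "y \<le> 2" "y \<ge> 0"
  have "n*(y+1) \<le> n*3" using h by (intro mult_left_mono) auto
  hence "1/(n*3) \<le> 1/(n*(y+1))" using h by (intro divide_left_mono) auto
  thus ?thesis by (simp add: mult.commute)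
qed

lemma b_lower: assumes "n \<ge> 1" shows "1 / (6 * real n * sqrt (real n)) \<le> b_fun n"
proof -
  have n: "real n \<ge> 1" using assms by simp
  have a: "sqrt (1 + 1 / real n) - 1 = (1 / real n) / (sqrt (1 + 1 / real n) + 1)"
  proof -
    have "(sqrt (1 + 1 / real n) - 1) * (sqrt (1 + 1 / real n) + 1) = 1 / real n"
      using n by (simp add: algebra_simps)
    moreover have "sqrt (1 + 1 / real n) + 1 > 0" by (simp add: add_pos_nonneg)
    ultimately show ?thesis by (rule div_aux)
  qed
  have "sqrt (1 + 1 / real n) \<le> 2"
  proof -
    have "1 + 1 / real n \<le> 4" using n by (simp add: divide_le_eq)
    hence "sqrt (1 + 1 / real n) \<le> sqrt 4" by (rule real_sqrt_le_mono)
    thus ?thesis by simp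
  qed
  hence a2: "1 / (3 * real n) \<le> sqrt (1 + 1 / real n) - 1" unfolding a using n
    by (intro aux3) auto
  have "sqrt (real n + 1) \<le> sqrt (4 * real n)" using n by simp
  also have "\<dots> = 2 * sqrt (real n)" by (simp add: real_sqrt_mult)
  finally have s2: "sqrt (real n + 1) \<le> 2 * sqrt (real n)" .
  have "1 / (6 * real n * sqrt (real n)) = (1 / (3 * real n)) / (2 * sqrt (real n))" by simp
  also have "\<dots> \<le> (sqrt (1 + 1 / real n) - 1) / (2 * sqrt (real n))"
    by (rule divide_right_mono[OF a2]) simp
  also have "\<dots> \<le> (sqrt (1 + 1 / real n) - 1) / sqrt (real n + 1)"
    using a2 n s2 by (intro divide_left_mono) auto
  finally show ?thesis by (simp add: b_fun_def)
qed

lemma abel_bound: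
  fixes p m :: real and n :: nat
  assumes p: "p > 0" and m: "m > 0" and n1: "n \<ge> 1"
  defines "r \<equiv> m / (m + p)"
  defines "s \<equiv> r * exp (1 - r)"
  defines "K \<equiv> p * exp p * exp (- (m * p / (m + p)))"
  shows "abel_pmf p m n \<le> K * s ^ n / real n"
proof -
  have n: "real n \<ge> 1" using n1 by simp
  have r: "0 < r" using p m by (simp add: r_def)
  define X where "X = (p + real n) powr (real n - 1)"
  define E0 where "E0 = exp (- (m * p / (m + p)))"
  have X: "X = (p + real n) ^ (n - 1)"
  proof -
    have e: "real n - 1 = real (n - 1)" using n1 by (simp add: of_nat_diff)
    have "(p + real n) powr real (n - 1) = (p + real n) ^ (n - 1)" using p by (intro powr_realpow) simp
    thus ?thesis unfolding X_def e .
  qed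
  have Xb: "X \<le> real n ^ (n - 1) * exp p"
  proof -
    have eq: "p + real n = real n * (1 + p / real n)" using n by (simp add: field_simps)
    have e1: "X = real n ^ (n - 1) * (1 + p / real n) ^ (n - 1)" unfolding X eq by (simp only: power_mult_distrib)
    have "(1 + p / real n) ^ (n - 1) \<le> exp (p / real n) ^ (n - 1)"
      using p n by (intro power_mono) auto
    also have "\<dots> = exp (real (n - 1) * (p / real n))" by (rule exp_of_nat_mult[symmetric])
    also have "\<dots> \<le> exp p"
    proof -
      have "real (n - 1) \<le> real n" by simp
      hence "real (n - 1) * (p / real n) \<le> real n * (p / real n)" using p n by (intro mult_right_mono) auto
      also have "\<dots> = p" using n by simp
      finally show ?thesis by simp
    qed
    finally have e2: "(1 + p / real n) ^ (n - 1) \<le> exp p" .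
    have "real n ^ (n - 1) * (1 + p / real n) ^ (n - 1) \<le> real n ^ (n - 1) * exp p"
      using e2 n by (intro mult_left_mono) auto
    thus ?thesis using e1 by simp
  qed
  have Y: "exp (real n * (ln r - r)) = (r * exp (- r)) ^ n"
  proof -
    have "exp (real n * (ln r - r)) = exp (ln r - r) ^ n" by (simp add: exp_of_nat_mult)
    also have "exp (ln r - r) = r * exp (- r)" using r by (simp add: exp_diff divide_inverse exp_minus)
    finally show ?thesis .
  qed
  have F: "1 / fact n \<le> exp (real n) / real n ^ n"
    using pow_le_exp_fact[of n] n by (simp add: field_simps)
  have "abel_pmf p m n = p * X * (1 / fact n) * ((r * exp (- r)) ^ n * E0)"
    unfolding abel_pmf_def X_def E0_def r_def[symmetric] using Y
    by (simp add: exp_diff exp_minus divide_inverse)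
  also have "\<dots> \<le> p * (real n ^ (n - 1) * exp p) * (exp (real n) / real n ^ n) * ((r * exp (- r)) ^ n * E0)"
    using Xb F p r by (intro mult_right_mono mult_mono mult_left_mono) (auto simp: X X_def E0_def)
  also have "\<dots> = K * s ^ n / real n"
  proof -
    have nn: "real n ^ n = real n * real n ^ (n - 1)" using n1 by (cases n) auto
    have ss: "exp (real n) * (r * exp (- r)) ^ n = s ^ n"
      unfolding s_def by (simp add: exp_diff exp_minus power_mult_distrib exp_of_nat_mult[symmetric] field_simps)
    show ?thesis unfolding K_def E0_def nn using n ss[symmetric]
      by (simp add: field_simps)
  qed
  finally show ?thesis .
qed

lemma abel_nonneg: "p > 0 \<Longrightarrow> 0 \<le> abel_pmf p m n"
  unfolding abel_pmf_def by simp

theorem mainTheorem3: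
  fixes p m :: real
  assumes "p > 0" and "m > 0"
  shows "\<exists>C::real. \<forall>n::nat. n \<ge> 1 \<longrightarrow> abel_cond_pmf p m n \<le> C * b_fun n"
proof -
  define r where "r = m / (m + p)"
  define s where "s = r * exp (1 - r)"
  define K where "K = p * exp p * exp (- (m * p / (m + p)))"
  define S where "S = (\<Sum>k. abel_pmf p m (Suc k))"
  define A where "A = 6 * (K * (s / (1 - s)))"
  have r: "0 < r" "r < 1" using assms by (auto simp: r_def)
  have s0: "0 < s" using r by (simp add: s_def)
  have "s = exp (ln r + (1 - r))" using r by (simp add: s_def exp_add)
  also have "\<dots> < exp 0" using ln_strict[OF r] by simp
  finally have s1: "s < 1" by simp
  have K0: "0 < K" using assms by (simp add: K_def)
  have fb: "abel_pmf p m n \<le> A * b_fun n" if n1: "n \<ge> 1" for n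
  proof -
    have n: "real n \<ge> 1" using n1 by simp
    have "sqrt (real n) \<le> sqrt (real n * real n)"
      using n by (intro real_sqrt_le_mono) (simp add: mult_le_cancel_left1)
    hence sq: "0 < sqrt (real n)" "sqrt (real n) \<le> real n" using n by auto
    have g: "real n * s ^ n \<le> s / (1 - s)" by (rule geo_bound[OF s0 s1])
    have "abel_pmf p m n \<le> K * s ^ n / real n"
      using abel_bound[OF assms n1] by (simp add: r_def s_def K_def)
    also have "\<dots> = K * (real n * s ^ n) / (real n * real n)" using n by simp
    also have "\<dots> \<le> K * (s / (1 - s)) / (real n * sqrt (real n))"
    proof (rule frac_le)
      show "0 \<le> K * (s / (1 - s))" using K0 s0 s1 by simp
      show "K * (real n * s ^ n) \<le> K * (s / (1 - s))" using g K0 by (intro mult_left_mono) auto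
      show "0 < real n * sqrt (real n)" using sq n by simp
      show "real n * sqrt (real n) \<le> real n * real n" using sq n by simp
    qed
    also have "\<dots> = 6 * (K * (s / (1 - s))) * (1 / (6 * real n * sqrt (real n)))" by simp
    also have "\<dots> \<le> A * b_fun n" unfolding A_def
      using b_lower[OF n1] K0 s0 s1 by (intro mult_left_mono) auto
    finally show ?thesis .
  qed
  show ?thesis
  proof (cases "S > 0")
    case True
    show ?thesis
    proof (intro exI allI impI)
      fix n :: nat assume "n \<ge> 1"
      hence "abel_pmf p m n / S \<le> (A * b_fun n) / S" using fb True by (intro divide_right_mono) auto
      thus "abel_cond_pmf p m n \<le> (A / S) * b_fun n" by (simp add: abel_cond_pmf_def S_def)
    qed
  next
    case False
    show ?thesis
    proof (intro exI allI impI)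
      fix n :: nat assume "n \<ge> 1"
      have "abel_pmf p m n / S \<le> 0" using False abel_nonneg[OF assms(1)]
        by (simp add: divide_nonneg_nonpos)
      thus "abel_cond_pmf p m n \<le> 0 * b_fun n" by (simp add: abel_cond_pmf_def S_def)
    qed
  qed
qed

end
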